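(* Let $f$ be a continuous $1$-periodic function on $\mathbb{R}^n$, and let $\{g_m\}_{m\in\mathbb{N}}$ be a uniformly bounded sequence of continuous $1$-periodic functions on $\mathbb{R}^n$ converging pointwise to a function $g$ on $\mathbb{R}^n$. Let $\{\epsilon_m\}$ be a sequence of positive real numbers with $\epsilon_m\to0$. Then $$\lim_{m\to\infty}\epsilon_m^{n/2}\int_{\mathbb{R}^n}e^{-\pi\epsilon_m|x|^2}f(x)g_m(x)\,dx=\int_{\mathbb{T}^n}f(x)g(x)\,dx.$$
   Context: $1$-periodic means $h(x+k)=h(x)$ for all $x\in\mathbb{R}^n$, $k\in\mathbb{Z}^n$; $\int_{\mathbb{T}^n}$ denotes the integral over the unit cube $[0,1)^n$ (a fundamental domain of $\mathbb{T}^n=\mathbb{R}^n/\mathbb{Z}^n$). *)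

theory Defs
  imports "HOL-Analysis.Analysis"
begin

definition periodic1 :: "(real ^ 'n \<Rightarrow> 'b) \<Rightarrow> bool" where
  "periodic1 h \<longleftrightarrow> (\<forall>x k. (\<forall>i. k $ i \<in> \<int>) \<longrightarrow> h (x + k) = h x)"

text \<open>The fundamental domain [0,1)^n of the torus.\<close>
definition unit_cube :: "(real ^ 'n) set" where
  "unit_cube = {x. \<forall>i. 0 \<le> x $ i \<and> x $ i < 1}"

end

theory Submission
  imports Defs "HOL-Probability.Distributions"
begin

definition gauss :: "'a::euclidean_space \<Rightarrow> real" where
  "gauss u = exp (- pi * (norm u)\<^sup>2)"

lemma gauss_1d_nn: "(\<integral>\<^sup>+x. ennreal (exp (- pi * x\<^sup>2)) \<partial>lborel) = 1"
proof -
  define \<sigma> where "\<sigma> = 1 / sqrt (2 * pi)"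
  have s2: "\<sigma>\<^sup>2 = 1 / (2*pi)" unfolding \<sigma>_def by (simp add: power_divide)
  have sp: "\<sigma> > 0" unfolding \<sigma>_def by simp
  have a1: "2 * pi * \<sigma>\<^sup>2 = 1" using s2 by simp
  have a2: "-(x - 0)\<^sup>2 / (2 * \<sigma>\<^sup>2) = - pi * x\<^sup>2" for x unfolding s2 by (simp add: field_simps)
  have eq: "normal_density 0 \<sigma> x = exp (- pi * x\<^sup>2)" for x
    unfolding normal_density_def a1 a2 by simp
  have "(\<integral>\<^sup>+x. ennreal (normal_density 0 \<sigma> x) \<partial>lborel) = ennreal (\<integral>x. normal_density 0 \<sigma> x \<partial>lborel)"
    using integrable_normal_density[OF sp] by (intro nn_integral_eq_integral) auto
  then have "(\<integral>\<^sup>+x. ennreal (normal_density 0 \<sigma> x) \<partial>lborel) = 1"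
    using integral_normal_density[OF sp, of 0] by simp
  then show ?thesis by (simp only: eq)
qed

lemma gauss_nn: "(\<integral>\<^sup>+x. ennreal (gauss (x::'a::euclidean_space)) \<partial>lborel) = 1"
proof -
  have "gauss x = (\<Prod>b\<in>Basis. exp (- pi * (x \<bullet> b)\<^sup>2))" for x :: 'a
  proof -
    have "(norm x)\<^sup>2 = (\<Sum>b\<in>Basis. (x \<bullet> b)\<^sup>2)"
      by (subst power2_norm_eq_inner, subst euclidean_inner) (simp add: power2_eq_square)
    then show ?thesis unfolding gauss_def
      by (simp add: sum_distrib_left exp_sum)
  qed
  then have eqx: "ennreal (gauss x) = (\<Prod>b\<in>Basis. ennreal (exp (- pi * (x \<bullet> b)\<^sup>2)))" for x :: 'a
    by (simp add: prod_ennreal)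
  have "(\<integral>\<^sup>+x. ennreal (gauss (x::'a)) \<partial>lborel) = (\<integral>\<^sup>+x. (\<Prod>b\<in>Basis. ennreal (exp (- pi * ((x::'a) \<bullet> b)\<^sup>2))) \<partial>lborel)"
    by (simp only: eqx)
  also have "\<dots> = (\<Prod>b\<in>(Basis::'a set). (\<integral>\<^sup>+x. ennreal (exp (- pi * x\<^sup>2)) \<partial>lborel))"
    by (rule nn_integral_lborel_prod) auto
  also have "\<dots> = 1" unfolding gauss_1d_nn by simp
  finally show ?thesis .
qed

lemma gauss_integrable: "integrable lborel (gauss :: 'a::euclidean_space \<Rightarrow> real)"
  and gauss_integral: "(\<integral>x. gauss (x::'a) \<partial>lborel) = 1"
proof -
  have m: "(gauss :: 'a \<Rightarrow> real) \<in> borel_measurable lborel" unfolding gauss_def by measurable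
  have nn: "\<And>x. 0 \<le> gauss x" unfolding gauss_def by simp
  show "integrable lborel (gauss :: 'a::euclidean_space \<Rightarrow> real)"
    using m nn gauss_nn[where 'a='a] by (intro integrableI_nonneg) auto
  then show "(\<integral>x. gauss (x::'a) \<partial>lborel) = 1"
  proof -
    assume i: "integrable lborel (gauss :: 'a::euclidean_space \<Rightarrow> real)"
    have "ennreal (\<integral>x. gauss (x::'a) \<partial>lborel) = 1"
      using nn_integral_eq_integral[OF i AE_I2[OF nn]] gauss_nn[where 'a='a] by simp
    then show ?thesis using nn by (simp add: integral_nonneg)
  qed
qed

lemma lborel_integral_translate:
  fixes f :: "'a::euclidean_space \<Rightarrow> real"
  assumes [measurable]: "f \<in> borel_measurable borel"
  shows "(\<integral>x. f (a + x) \<partial>lborel) = (\<integral>x. f x \<partial>lborel)"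
proof -
  have "(\<integral>x. f x \<partial>(distr lborel borel ((+) a))) = (\<integral>x. f (a + x) \<partial>lborel)"
    by (subst integral_distr) (auto simp: o_def)
  then show ?thesis by (simp add: lborel_distr_plus)
qed

lemma lborel_integrable_translate:
  fixes f :: "'a::euclidean_space \<Rightarrow> real"
  assumes "integrable lborel f"
  shows "integrable lborel (\<lambda>x. f (a + x))"
proof -
  have [measurable]: "f \<in> borel_measurable borel" using assms by auto
  have "integrable (distr lborel borel ((+) a)) f" by (simp add: lborel_distr_plus assms)
  then show ?thesis by (subst (asm) integrable_distr_eq) (auto simp: o_def)
qed

lemma lborel_integral_scale:
  fixes f :: "'a::euclidean_space \<Rightarrow> real"
  assumes [measurable]: "f \<in> borel_measurable borel" and c: "c \<noteq> 0"
  shows "(\<integral>x. f x \<partial>lborel) = \<bar>c\<bar>^DIM('a) * (\<integral>x. f (c *\<^sub>R x) \<partial>lborel)"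
proof -
  have "(\<integral>x. f x \<partial>lborel) = (\<integral>x. f x \<partial>(density (distr lborel borel (\<lambda>x. 0 + c *\<^sub>R x)) (\<lambda>_. \<bar>c\<bar>^DIM('a))))"
    using lborel_affine[OF c, of "0::'a"] by simp
  also have "\<dots> = (\<integral>x. \<bar>c\<bar>^DIM('a) * f x \<partial>(distr lborel borel (\<lambda>x. 0 + c *\<^sub>R x)))"
    by (subst integral_density) auto
  also have "\<dots> = (\<integral>x. \<bar>c\<bar>^DIM('a) * f (c *\<^sub>R x) \<partial>lborel)"
    by (subst integral_distr) auto
  finally show ?thesis by simp
qed

lemma lborel_integrable_scale:
  fixes f :: "'a::euclidean_space \<Rightarrow> real"
  assumes "integrable lborel f" and c: "c \<noteq> 0"
  shows "integrable lborel (\<lambda>x. f (c *\<^sub>R x))"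
proof -
  have [measurable]: "f \<in> borel_measurable borel" using assms by auto
  have "integrable (density (distr lborel borel (\<lambda>x. 0 + c *\<^sub>R x)) (\<lambda>_. \<bar>c\<bar>^DIM('a))) f"
    using lborel_affine[OF c, of "0::'a"] assms(1) by simp
  then have "integrable (distr lborel borel (\<lambda>x. 0 + c *\<^sub>R x)) (\<lambda>x. \<bar>c\<bar>^DIM('a) * f x)"
    by (subst (asm) integrable_density) auto
  then have "integrable lborel (\<lambda>x. \<bar>c\<bar>^DIM('a) * f (c *\<^sub>R x))"
    by (subst (asm) integrable_distr_eq) (auto simp: o_def)
  then show ?thesis using c by simp
qed

lemma gauss_borel[measurable]: "gauss \<in> borel_measurable borel"
  unfolding gauss_def by measurable

lemma gauss_cont: "continuous_on UNIV gauss"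
  unfolding gauss_def by (intro continuous_intros)

lemma gauss_nonneg: "0 \<le> gauss x"
  unfolding gauss_def by simp

lemma gauss_shift_integrable: "integrable lborel (\<lambda>u. gauss (u - a))"
  using lborel_integrable_translate[OF gauss_integrable, of "-a"] by (simp add: add.commute)

lemma gauss_shift_integral: "(\<integral>u. gauss (u - a) \<partial>lborel) = 1"
  using lborel_integral_translate[OF gauss_borel, of "-a"] gauss_integral by (simp add: add.commute)

lemma gauss_shift_L1:
  fixes a :: "nat \<Rightarrow> 'a::euclidean_space"
  assumes a: "a \<longlonglongrightarrow> 0"
  shows "(\<lambda>k. \<integral>u. \<bar>gauss (u - a k) - gauss u\<bar> \<partial>lborel) \<longlonglongrightarrow> 0"
proof -
  define m where "m k u = min (gauss (u - a k)) (gauss u)" for k u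
  have mi: "integrable lborel (m k)" for k
    unfolding m_def by (intro integrable_min gauss_shift_integrable gauss_integrable)
  have eq: "(\<integral>u. \<bar>gauss (u - a k) - gauss u\<bar> \<partial>lborel) = 2 - 2 * (\<integral>u. m k u \<partial>lborel)" for k
  proof -
    have "(\<integral>u. \<bar>gauss (u - a k) - gauss u\<bar> \<partial>lborel) = (\<integral>u. gauss (u - a k) + gauss u - 2 * m k u \<partial>lborel)"
      by (rule Bochner_Integration.integral_cong) (auto simp: m_def)
    also have "\<dots> = (\<integral>u. gauss (u - a k) \<partial>lborel) + (\<integral>u. gauss (u::'a) \<partial>lborel) - 2 * (\<integral>u. m k u \<partial>lborel)"
    proof -
      have i1: "integrable lborel (\<lambda>u. gauss (u - a k) + gauss u)"
        by (intro Bochner_Integration.integrable_add gauss_shift_integrable gauss_integrable)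
      have i2: "integrable lborel (\<lambda>u. 2 * m k u)" using mi by simp
      show ?thesis
        by (simp add: Bochner_Integration.integral_diff[OF i1 i2]
          Bochner_Integration.integral_add[OF gauss_shift_integrable gauss_integrable])
    qed
    finally show ?thesis by (simp add: gauss_shift_integral gauss_integral)
  qed
  have lim: "(\<lambda>k. \<integral>u. m k u \<partial>lborel) \<longlonglongrightarrow> (\<integral>u. gauss (u::'a) \<partial>lborel)"
  proof (rule integral_dominated_convergence[where w=gauss])
    show "AE x in lborel. (\<lambda>k. m k x) \<longlonglongrightarrow> gauss x"
    proof (intro AE_I2)
      fix x :: 'a
      have "(\<lambda>k. x - a k) \<longlonglongrightarrow> x - 0" by (intro tendsto_intros a)
      then have "(\<lambda>k. gauss (x - a k)) \<longlonglongrightarrow> gauss x"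
        using gauss_cont by (intro continuous_on_tendsto_compose[where s=UNIV, OF gauss_cont]) auto
      then have "(\<lambda>k. min (gauss (x - a k)) (gauss x)) \<longlonglongrightarrow> min (gauss x) (gauss x)"
        by (intro tendsto_intros)
      then show "(\<lambda>k. m k x) \<longlonglongrightarrow> gauss x" by (simp add: m_def)
    qed
    show "AE x in lborel. norm (m k x) \<le> gauss x" for k
      by (intro AE_I2) (auto simp: m_def gauss_nonneg)
  qed (auto simp: m_def gauss_integrable)
  have "(\<lambda>k. 2 - 2 * (\<integral>u. m k u \<partial>lborel)) \<longlonglongrightarrow> 2 - 2 * 1"
    using lim[unfolded gauss_integral] by (intro tendsto_intros)
  then show ?thesis by (simp add: eq)
qed

lemma gauss_shift_small:
  assumes "\<delta> > 0"
  shows "\<exists>r>0. \<forall>a::'a::euclidean_space. norm a < r \<longrightarrow> (\<integral>u. \<bar>gauss (u - a) - gauss u\<bar> \<partial>lborel) < \<delta>"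
proof (rule ccontr)
  assume "\<not> ?thesis"
  then have "\<forall>k::nat. \<exists>a::'a. norm a < 1 / real (Suc k) \<and> \<delta> \<le> (\<integral>u. \<bar>gauss (u - a) - gauss u\<bar> \<partial>lborel)"
    by (metis not_less of_nat_0_less_iff zero_less_Suc zero_less_divide_1_iff)
  then obtain a :: "nat \<Rightarrow> 'a" where a: "\<And>k. norm (a k) < 1 / real (Suc k)"
    and d: "\<And>k. \<delta> \<le> (\<integral>u. \<bar>gauss (u - a k) - gauss u\<bar> \<partial>lborel)"
    by metis
  have "a \<longlonglongrightarrow> 0" using a by (rule LIMSEQ_norm_0)
  from order_tendstoD(2)[OF gauss_shift_L1[OF this] assms]
  have "eventually (\<lambda>k. (\<integral>u. \<bar>gauss (u - a k) - gauss u\<bar> \<partial>lborel) < \<delta>) sequentially" .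
  then obtain k where "(\<integral>u. \<bar>gauss (u - a k) - gauss u\<bar> \<partial>lborel) < \<delta>"
    by (auto simp: eventually_sequentially)
  with d[of k] show False by simp
qed

definition cube :: "real ^ 'n \<Rightarrow> (real ^ 'n) set" where
  "cube x = {y. \<forall>i. x$i \<le> y$i \<and> y$i < x$i + 1}"

lemma cube_borel[measurable]: "cube x \<in> sets borel"
  unfolding cube_def by measurable

lemma cube_sub: "cube x \<subseteq> cbox x (x + 1)"
  unfolding cube_def by (auto simp: mem_box_cart less_imp_le)

lemma cube_finite: "emeasure lborel (cube x) < \<infinity>"
  by (rule le_less_trans[OF emeasure_mono[OF cube_sub] emeasure_compact_finite]) auto

lemma integrable_ind_bdd:
  fixes h :: "real ^ 'n \<Rightarrow> real"
  assumes S[measurable]: "S \<in> sets borel" and Sf: "emeasure lborel S < \<infinity>"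
    and h[measurable]: "h \<in> borel_measurable borel" and M: "\<And>x. \<bar>h x\<bar> \<le> M"
  shows "integrable lborel (\<lambda>y. indicator S y * h y)"
proof (rule Bochner_Integration.integrable_bound[where f="\<lambda>y. M * indicator S y"])
  show "integrable lborel (\<lambda>y. M * indicator S y :: real)"
    using Sf by (intro integrable_mult_right integrable_real_indicator) auto
  show "AE x in lborel. norm (indicator S x * h x) \<le> norm (M * indicator S x :: real)"
    using M by (intro AE_I2) (auto simp: indicator_def intro: order_trans[OF _ abs_ge_self])
qed auto

lemma cube_ind_split:
  fixes x y :: "real ^ 'n" and i :: 'n
  assumes t: "0 \<le> t" "t \<le> 1"
  defines "e \<equiv> axis i (1::real)"
  shows "indicator (cube (x + t *\<^sub>R e)) y =
    (indicator {z \<in> cube x. x$i + t \<le> z$i} y + indicator {z \<in> cube x. z$i < x$i + t} (-e + y) :: real)"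
proof -
  have ec: "e $ j = (if j = i then 1 else 0)" for j unfolding e_def axis_def by simp
  have c1: "y \<in> cube (x + t *\<^sub>R e) \<longleftrightarrow> (\<forall>j. j \<noteq> i \<longrightarrow> x$j \<le> y$j \<and> y$j < x$j + 1) \<and> x$i + t \<le> y$i \<and> y$i < x$i + t + 1"
    unfolding cube_def using t by (auto simp: ec)
  have c2: "y \<in> {z \<in> cube x. x$i + t \<le> z$i} \<longleftrightarrow> (\<forall>j. j \<noteq> i \<longrightarrow> x$j \<le> y$j \<and> y$j < x$j + 1) \<and> x$i + t \<le> y$i \<and> y$i < x$i + 1"
    unfolding cube_def using t
    apply auto
    subgoal for j by (cases "j = i") auto
    done
  have c3: "(-e + y) \<in> {z \<in> cube x. z$i < x$i + t} \<longleftrightarrow> (\<forall>j. j \<noteq> i \<longrightarrow> x$j \<le> y$j \<and> y$j < x$j + 1) \<and> x$i + 1 \<le> y$i \<and> y$i < x$i + t + 1"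
    unfolding cube_def using t by (auto simp: ec)
  show ?thesis
    unfolding indicator_def using c1 c2 c3 t by auto
qed

lemma periodic1_axis:
  fixes h :: "real ^ 'n \<Rightarrow> real"
  assumes "periodic1 h"
  shows "h (-axis i 1 + y) = h y"
proof -
  have "h ((-axis i 1 + y) + axis i 1) = h (-axis i 1 + y)"
    using assms unfolding periodic1_def by (intro assms[unfolded periodic1_def, rule_format]) (auto simp: axis_def)
  then show ?thesis by simp
qed

lemma periodic1_axis':
  fixes h :: "real ^ 'n \<Rightarrow> real"
  assumes "periodic1 h"
  shows "h (y - axis i 1) = h y"
  using periodic1_axis[OF assms, of i y] by (simp add: add.commute)

lemma cube_shift_step:
  fixes h :: "real ^ 'n \<Rightarrow> real" and i :: 'n
  assumes h[measurable]: "h \<in> borel_measurable borel" and M: "\<And>x. \<bar>h x\<bar> \<le> M"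
    and per: "periodic1 h" and t: "0 \<le> t" "t \<le> 1"
  shows "(\<integral>y. indicator (cube (x + t *\<^sub>R axis i 1)) y * h y \<partial>lborel) = (\<integral>y. indicator (cube x) y * h y \<partial>lborel)"
proof -
  define e where "e = axis i (1::real)"
  define A where "A = {z \<in> cube x. x$i + t \<le> z$i}"
  define B where "B = {z \<in> cube x. z$i < x$i + t}"
  have [measurable]: "A \<in> sets borel" "B \<in> sets borel" unfolding A_def B_def by measurable
  have Af: "emeasure lborel A < \<infinity>" "emeasure lborel B < \<infinity>"
    unfolding A_def B_def
    by (intro le_less_trans[OF emeasure_mono cube_finite[of x]]; auto)+
  have iA: "integrable lborel (\<lambda>y. indicator A y * h y)" and iB: "integrable lborel (\<lambda>y. indicator B y * h y)"
    using Af M by (auto intro!: integrable_ind_bdd)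
  have "(\<integral>y. indicator (cube (x + t *\<^sub>R e)) y * h y \<partial>lborel)
      = (\<integral>y. indicator A y * h y + indicator B (-e + y) * h (-e + y) \<partial>lborel)"
    by (rule Bochner_Integration.integral_cong[OF refl])
      (simp add: cube_ind_split[OF t] A_def B_def e_def periodic1_axis[OF per] periodic1_axis'[OF per] distrib_right)
  also have "\<dots> = (\<integral>y. indicator A y * h y \<partial>lborel) + (\<integral>y. indicator B (-e + y) * h (-e + y) \<partial>lborel)"
    by (rule Bochner_Integration.integral_add[OF iA lborel_integrable_translate[OF iB]])
  also have "(\<integral>y. indicator B (-e + y) * h (-e + y) \<partial>lborel) = (\<integral>y. indicator B y * h y \<partial>lborel)"
    by (rule lborel_integral_translate) measurable
  also have "(\<integral>y. indicator A y * h y \<partial>lborel) + (\<integral>y. indicator B y * h y \<partial>lborel)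
      = (\<integral>y. indicator A y * h y + indicator B y * h y \<partial>lborel)"
    by (rule Bochner_Integration.integral_add[OF iA iB, symmetric])
  also have "\<dots> = (\<integral>y. indicator (cube x) y * h y \<partial>lborel)"
  proof (rule Bochner_Integration.integral_cong[OF refl])
    fix y
    have "indicator (cube x) y = (indicator A y + indicator B y :: real)"
      unfolding A_def B_def indicator_def by auto
    then show "indicator A y * h y + indicator B y * h y = indicator (cube x) y * h y"
      by (simp add: distrib_right)
  qed
  finally show ?thesis by (simp add: e_def)
qed

lemma cube_shift_const:
  fixes h :: "real ^ 'n \<Rightarrow> real"
  assumes h[measurable]: "h \<in> borel_measurable borel" and M: "\<And>x. \<bar>h x\<bar> \<le> M"
    and per: "periodic1 h"
  shows "(\<integral>y. indicator (cube x) y * h y \<partial>lborel) = (\<integral>y. indicator (cube 0) y * h y \<partial>lborel)"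
proof -
  define \<Phi> where "\<Phi> x = (\<integral>y. indicator (cube x) y * h y \<partial>lborel)" for x
  have one: "\<Phi> (x + t *\<^sub>R axis i 1) = \<Phi> x" if "\<bar>t\<bar> \<le> 1" for x t i
  proof (cases "t \<ge> 0")
    case True
    then show ?thesis unfolding \<Phi>_def using that by (intro cube_shift_step[OF h M per]) auto
  next
    case False
    have "\<Phi> ((x + t *\<^sub>R axis i 1) + (-t) *\<^sub>R axis i 1) = \<Phi> (x + t *\<^sub>R axis i 1)"
      unfolding \<Phi>_def using that False by (intro cube_shift_step[OF h M per]) auto
    then show ?thesis by (simp add: algebra_simps)
  qed
  have nat: "\<forall>x t. \<bar>t\<bar> \<le> real N \<longrightarrow> \<Phi> (x + t *\<^sub>R axis i 1) = \<Phi> x" for N i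
  proof (induction N)
    case 0 then show ?case by simp
  next
    case (Suc N)
    show ?case
    proof (intro allI impI)
      fix x t assume t: "\<bar>t\<bar> \<le> real (Suc N)"
      show "\<Phi> (x + t *\<^sub>R axis i 1) = \<Phi> x"
      proof (cases "\<bar>t\<bar> \<le> 1")
        case True then show ?thesis by (rule one)
      next
        case False
        define s where "s = sgn t"
        have s: "\<bar>s\<bar> \<le> 1" "\<bar>t - s\<bar> \<le> real N" using False t unfolding s_def by (auto simp: sgn_if)
        have "\<Phi> (x + t *\<^sub>R axis i 1) = \<Phi> ((x + s *\<^sub>R axis i 1) + (t - s) *\<^sub>R axis i 1)"
          by (simp add: algebra_simps)
        also have "\<dots> = \<Phi> (x + s *\<^sub>R axis i 1)" using Suc.IH s by blast
        also have "\<dots> = \<Phi> x" using one s by blast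
        finally show ?thesis .
      qed
    qed
  qed
  have all: "\<Phi> (x + t *\<^sub>R axis i 1) = \<Phi> x" for x t i
    using nat[of "nat \<lceil>\<bar>t\<bar>\<rceil>" i] by (meson real_nat_ceiling_ge)
  have fin: "\<Phi> (\<Sum>i\<in>S. (x$i) *\<^sub>R axis i 1) = \<Phi> 0" if "finite S" for S
    using that
  proof (induction S rule: finite_induct)
    case empty then show ?case by simp
  next
    case (insert j S)
    have "\<Phi> (\<Sum>i\<in>insert j S. (x$i) *\<^sub>R axis i 1) = \<Phi> ((\<Sum>i\<in>S. (x$i) *\<^sub>R axis i 1) + (x$j) *\<^sub>R axis j 1)"
      using insert by (simp add: add.commute)
    also have "\<dots> = \<Phi> (\<Sum>i\<in>S. (x$i) *\<^sub>R axis i 1)" by (rule all)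
    finally show ?case using insert by simp
  qed
  have "x = (\<Sum>i\<in>UNIV. (x$i) *\<^sub>R axis i 1)"
    using basis_expansion[of x] by (simp add: scalar_mult_eq_scaleR)
  then have "\<Phi> x = \<Phi> 0" using fin[of UNIV] by simp
  then show ?thesis unfolding \<Phi>_def .
qed

lemma torus_translate:
  fixes h :: "real ^ 'n \<Rightarrow> real"
  assumes h[measurable]: "h \<in> borel_measurable borel" and M: "\<And>x. \<bar>h x\<bar> \<le> M"
    and per: "periodic1 h"
  shows "(\<integral>y. indicator (cube 0) y * h (x + y) \<partial>lborel) = (\<integral>y. indicator (cube 0) y * h y \<partial>lborel)"
proof -
  have "(\<integral>y. indicator (cube 0) y * h (x + y) \<partial>lborel) = (\<integral>y. indicator (cube x) (x + y) * h (x + y) \<partial>lborel)"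
    by (rule Bochner_Integration.integral_cong[OF refl]) (simp add: cube_def indicator_def)
  also have "\<dots> = (\<integral>y. indicator (cube x) y * h y \<partial>lborel)"
    by (rule lborel_integral_translate) measurable
  also have "\<dots> = (\<integral>y. indicator (cube 0) y * h y \<partial>lborel)"
    by (rule cube_shift_const[OF h M per])
  finally show ?thesis .
qed

lemma integrable_pair_prod:
  fixes f :: "'a::euclidean_space \<Rightarrow> real" and g :: "'b::euclidean_space \<Rightarrow> real"
  assumes f: "integrable lborel f" and g: "integrable lborel g"
    and f0: "\<And>x. 0 \<le> f x" and g0: "\<And>x. 0 \<le> g x"
  shows "integrable (lborel \<Otimes>\<^sub>M lborel) (\<lambda>p. f (fst p) * g (snd p))"
proof -
  have [measurable]: "f \<in> borel_measurable borel" "g \<in> borel_measurable borel" using f g by auto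
  have "(\<integral>\<^sup>+p. ennreal (f (fst p) * g (snd p)) \<partial>(lborel \<Otimes>\<^sub>M lborel))
      = (\<integral>\<^sup>+x. \<integral>\<^sup>+y. ennreal (f x * g y) \<partial>lborel \<partial>lborel)"
    by (subst lborel.nn_integral_fst[symmetric]) auto
  also have "\<dots> = (\<integral>\<^sup>+x. ennreal (f x) * (\<integral>\<^sup>+y. ennreal (g y) \<partial>lborel) \<partial>lborel)"
    using f0 g0 by (simp add: ennreal_mult nn_integral_cmult)
  also have "\<dots> = (\<integral>\<^sup>+x. ennreal (f x) \<partial>lborel) * (\<integral>\<^sup>+y. ennreal (g y) \<partial>lborel)"
    by (simp add: nn_integral_multc)
  also have "\<dots> < \<infinity>"
    using f g f0 g0 by (simp add: integrable_iff_bounded ennreal_mult_less_top)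
  finally show ?thesis
    using f0 g0 by (intro integrableI_nonneg) (auto simp: measurable_split_conv)
qed

lemma cube0_measure: "emeasure lborel (cube (0::real^'n)) = 1"
proof -
  have a: "box 0 1 \<subseteq> cube (0::real^'n)" unfolding cube_def by (auto simp: mem_box_cart less_imp_le)
  have b: "cube (0::real^'n) \<subseteq> cbox 0 1" using cube_sub[of 0] by simp
  have one: "(1::real^'n) \<bullet> b = 1" if "b \<in> Basis" for b
    using that by (auto simp: Basis_vec_def cart_eq_inner_axis[symmetric])
  have c1: "emeasure lborel (cbox (0::real^'n) 1) = 1"
    by (subst emeasure_lborel_cbox) (auto simp: one)
  have c2: "emeasure lborel (box (0::real^'n) 1) = 1"
    by (subst emeasure_lborel_box) (auto simp: one)
  have "emeasure lborel (box 0 (1::real^'n)) \<le> emeasure lborel (cube (0::real^'n))"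
    using a by (intro emeasure_mono) auto
  moreover have "emeasure lborel (cube (0::real^'n)) \<le> emeasure lborel (cbox 0 (1::real^'n))"
    using b by (intro emeasure_mono) auto
  ultimately show ?thesis using c1 c2 by simp
qed

lemma integrable_mult_bdd:
  fixes w h :: "'a::euclidean_space \<Rightarrow> real"
  assumes w: "integrable lborel w" and h[measurable]: "h \<in> borel_measurable borel"
    and M: "\<And>x. \<bar>h x\<bar> \<le> M"
  shows "integrable lborel (\<lambda>z. w z * h z)"
proof (rule Bochner_Integration.integrable_bound[where f="\<lambda>z. M * w z"])
  have [measurable]: "w \<in> borel_measurable borel" using w by auto
  show "(\<lambda>z. w z * h z) \<in> borel_measurable lborel" by measurable
  show "AE x in lborel. norm (w x * h x) \<le> norm (M * w x)"
  proof (intro AE_I2)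
    fix x
    have "\<bar>w x\<bar> * \<bar>h x\<bar> \<le> \<bar>w x\<bar> * \<bar>M\<bar>"
      using M[of x] by (intro mult_left_mono) auto
    then show "norm (w x * h x) \<le> norm (M * w x)" by (simp add: abs_mult mult.commute)
  qed
qed (use w in auto)

lemma main_estimate:
  fixes h :: "real ^ 'n \<Rightarrow> real"
  assumes h[measurable]: "h \<in> borel_measurable borel" and M: "\<And>x. \<bar>h x\<bar> \<le> M"
    and per: "periodic1 h" and s: "0 < s"
    and D: "\<And>y::real^'n. y \<in> cube 0 \<Longrightarrow> (\<integral>u. \<bar>gauss (u - s *\<^sub>R y) - gauss u\<bar> \<partial>lborel) \<le> \<delta>"
  shows "\<bar>s ^ CARD('n) * (\<integral>z. gauss (s *\<^sub>R z) * h z \<partial>lborel) - (\<integral>y. indicator (cube 0) y * h y \<partial>lborel)\<bar> \<le> M * \<delta>"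
proof -
  define T where "T = cube (0::real^'n)"
  define n where "n = CARD('n)"
  define w where "w z = gauss (s *\<^sub>R z)" for z :: "real^'n"
  define C where "C = (\<integral>y. indicator T y * h y \<partial>lborel)"
  define A where "A x = (\<integral>z. w z * h (x + z) \<partial>lborel)" for x
  define I where "I = (\<integral>z. w z * h z \<partial>lborel)"
  have DIM: "DIM(real^'n) = n" unfolding n_def by simp
  have [measurable]: "T \<in> sets borel" unfolding T_def by simp
  have [measurable]: "w \<in> borel_measurable borel" unfolding w_def by measurable
  have Tm: "measure lborel T = 1" using cube0_measure[where 'n='n] unfolding T_def by (simp add: measure_def)
  have Ti: "integrable lborel (indicator T :: real^'n \<Rightarrow> real)"
    using cube0_measure[where 'n='n] unfolding T_def by (intro integrable_real_indicator) auto
  have M0: "0 \<le> M" using M[of 0] by simp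
  have w0: "0 \<le> w z" for z unfolding w_def by (rule gauss_nonneg)
  have wi: "integrable lborel w" unfolding w_def using s by (intro lborel_integrable_scale gauss_integrable) auto
  have wI: "(\<integral>z. w z \<partial>lborel) = 1 / s ^ n"
  proof -
    have "(1::real) = \<bar>s\<bar> ^ n * (\<integral>z. w z \<partial>lborel)"
      using lborel_integral_scale[OF gauss_borel, of s, where 'a="real^'n"] s gauss_integral[where 'a="real^'n"]
      unfolding w_def DIM by simp
    then show ?thesis using s by (simp add: field_simps)
  qed
  have hx[measurable]: "(\<lambda>z. h (x + z)) \<in> borel_measurable borel" for x by measurable
  have Ai: "integrable lborel (\<lambda>z. w z * h (x + z))" for x
    by (rule integrable_mult_bdd[OF wi hx M])
  define F where "F x z = indicator T x * (w z * h (x + z))" for x z :: "real^'n"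
  have Fi: "integrable (lborel \<Otimes>\<^sub>M lborel) (case_prod F)"
  proof (rule Bochner_Integration.integrable_bound[where f="\<lambda>p. M * (indicator T (fst p) * w (snd p))"])
    show "integrable (lborel \<Otimes>\<^sub>M lborel) (\<lambda>p. M * (indicator T (fst p) * w (snd p)))"
      using integrable_pair_prod[OF Ti wi] w0 by (intro integrable_mult_right) auto
    show "case_prod F \<in> borel_measurable (lborel \<Otimes>\<^sub>M lborel)"
      unfolding F_def by measurable
    show "AE x in lborel \<Otimes>\<^sub>M lborel. norm (case_prod F x) \<le> norm (M * (indicator T (fst x) * w (snd x)))"
    proof (rule AE_I2)
      fix p :: "(real^'n) \<times> (real^'n)"
      obtain x z where p: "p = (x, z)" by (cases p)
      have "\<bar>indicator T x * w z\<bar> * \<bar>h (x + z)\<bar> \<le> \<bar>indicator T x * w z\<bar> * \<bar>M\<bar>"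
        using M[of "x + z"] M0 by (intro mult_left_mono) auto
      then show "norm (case_prod F p) \<le> norm (M * (indicator T (fst p) * w (snd p)))"
        unfolding F_def p by (simp add: abs_mult mult_ac)
    qed
  qed
  have fub: "(\<integral>z. (\<integral>x. F x z \<partial>lborel) \<partial>lborel) = (\<integral>x. (\<integral>z. F x z \<partial>lborel) \<partial>lborel)"
    by (rule lborel_pair.Fubini_integral[OF Fi])
  have inner1: "(\<integral>x. F x z \<partial>lborel) = w z * C" for z
  proof -
    have "(\<integral>x. F x z \<partial>lborel) = (\<integral>x. w z * (indicator T x * h (z + x)) \<partial>lborel)"
      unfolding F_def by (rule Bochner_Integration.integral_cong[OF refl]) (simp add: mult_ac add.commute)
    also have "\<dots> = w z * C"
      unfolding C_def T_def using torus_translate[OF h M per, of z] by simp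
    finally show ?thesis .
  qed
  have inner2: "(\<integral>z. F x z \<partial>lborel) = indicator T x * A x" for x
    unfolding F_def A_def by simp
  have LHS: "(\<integral>z. (\<integral>x. F x z \<partial>lborel) \<partial>lborel) = C / s ^ n"
    unfolding inner1 using wI by simp
  have TAi: "integrable lborel (\<lambda>x. indicator T x * A x)"
    using lborel_pair.integrable_fst'[OF Fi] unfolding inner2[symmetric] by simp
  have CA: "C = s ^ n * (\<integral>x. indicator T x * A x \<partial>lborel)"
    using fub LHS inner2 s by (simp add: field_simps)
  have II: "I = (\<integral>x. indicator T x * I \<partial>lborel)"
    using Tm by simp
  have diff: "s ^ n * I - C = s ^ n * (\<integral>x. indicator T x * (I - A x) \<partial>lborel)"
  proof -
    have "(\<integral>x. indicator T x * (I - A x) \<partial>lborel) = (\<integral>x. indicator T x * I - indicator T x * A x \<partial>lborel)"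
      by (simp add: right_diff_distrib)
    also have "\<dots> = (\<integral>x. indicator T x * I \<partial>lborel) - (\<integral>x. indicator T x * A x \<partial>lborel)"
      using Ti TAi by (intro Bochner_Integration.integral_diff) auto
    finally show ?thesis using II CA by (simp add: right_diff_distrib)
  qed
  have pw: "\<bar>I - A x\<bar> \<le> M * \<delta> / s ^ n" if x: "x \<in> T" for x
  proof -
    have Ax: "A x = (\<integral>z. w (z - x) * h z \<partial>lborel)"
    proof -
      have "(\<integral>z. w (z - x) * h z \<partial>lborel) = (\<integral>z. w ((x + z) - x) * h (x + z) \<partial>lborel)"
        by (rule lborel_integral_translate[symmetric]) measurable
      then show ?thesis unfolding A_def by simp
    qed
    have wsi: "integrable lborel (\<lambda>z. w (z - x))"
      using lborel_integrable_translate[OF wi, of "-x"] by (simp add: add.commute)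
    have d1: "integrable lborel (\<lambda>z. \<bar>w z - w (z - x)\<bar>)" using wi wsi by auto
    have "I - A x = (\<integral>z. (w z - w (z - x)) * h z \<partial>lborel)"
      unfolding I_def Ax using integrable_mult_bdd[OF wi h M] integrable_mult_bdd[OF wsi h M]
      by (simp add: left_diff_distrib Bochner_Integration.integral_diff)
    also have "\<bar>\<dots>\<bar> \<le> (\<integral>z. M * \<bar>w z - w (z - x)\<bar> \<partial>lborel)"
    proof (rule integral_abs_bound_integral)
      show "integrable lborel (\<lambda>z. (w z - w (z - x)) * h z)"
        using wi wsi by (intro integrable_mult_bdd[OF _ h M]) auto
      show "integrable lborel (\<lambda>z. M * \<bar>w z - w (z - x)\<bar>)" using d1 by auto
      show "\<bar>(w z - w (z - x)) * h z\<bar> \<le> M * \<bar>w z - w (z - x)\<bar>" for z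
      proof -
        have "\<bar>h z\<bar> * \<bar>w z - w (z - x)\<bar> \<le> M * \<bar>w z - w (z - x)\<bar>" by (rule mult_right_mono[OF M]) simp
        then show ?thesis by (simp add: abs_mult mult.commute)
      qed
    qed
    also have "\<dots> = M * (\<integral>z. \<bar>w z - w (z - x)\<bar> \<partial>lborel)" by simp
    also have "(\<integral>z. \<bar>w z - w (z - x)\<bar> \<partial>lborel) = (\<integral>u. \<bar>gauss (u - s *\<^sub>R x) - gauss u\<bar> \<partial>lborel) / s ^ n"
    proof -
      have "(\<integral>u. \<bar>gauss (u - s *\<^sub>R x) - gauss u\<bar> \<partial>lborel)
          = \<bar>s\<bar> ^ DIM(real^'n) * (\<integral>z. \<bar>gauss (s *\<^sub>R z - s *\<^sub>R x) - gauss (s *\<^sub>R z)\<bar> \<partial>lborel)"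
        using s by (intro lborel_integral_scale) auto
      also have "(\<lambda>z. \<bar>gauss (s *\<^sub>R z - s *\<^sub>R x) - gauss (s *\<^sub>R z)\<bar>) = (\<lambda>z. \<bar>w z - w (z - x)\<bar>)"
        unfolding w_def by (auto simp: scaleR_diff_right abs_minus_commute)
      finally show ?thesis using s unfolding DIM by (simp add: field_simps)
    qed
    also have "M * (\<dots>) \<le> M * (\<delta> / s ^ n)"
      using D[of x] x s M0 unfolding T_def by (intro mult_left_mono divide_right_mono) auto
    finally show ?thesis by simp
  qed
  have "\<bar>\<integral>x. indicator T x * (I - A x) \<partial>lborel\<bar> \<le> (\<integral>x. indicator T x * (M * \<delta> / s ^ n) \<partial>lborel)"
  proof (rule integral_abs_bound_integral)
    show "integrable lborel (\<lambda>x. indicator T x * (I - A x))"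
      using Ti TAi by (simp add: right_diff_distrib)
    show "integrable lborel (\<lambda>x. indicator T x * (M * \<delta> / s ^ n))" using Ti by simp
    show "\<bar>indicator T x * (I - A x)\<bar> \<le> indicator T x * (M * \<delta> / s ^ n)" for x
      using pw[of x] by (auto simp: indicator_def)
  qed
  also have "\<dots> = M * \<delta> / s ^ n" using Tm by simp
  finally have "\<bar>s ^ n * I - C\<bar> \<le> s ^ n * (M * \<delta> / s ^ n)"
    unfolding diff abs_mult using s by (simp add: pos_le_divide_eq mult.commute)
  then show ?thesis using s unfolding I_def C_def w_def T_def n_def by simp
qed

lemma periodic_bounded:
  fixes f :: "real ^ 'n \<Rightarrow> real"
  assumes f: "continuous_on UNIV f" and per: "periodic1 f"
  shows "\<exists>M. \<forall>x. \<bar>f x\<bar> \<le> M"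
proof -
  have "compact (f ` cbox 0 1)"
    by (intro compact_continuous_image continuous_on_subset[OF f]) auto
  then obtain M where M: "\<And>y. y \<in> f ` cbox 0 1 \<Longrightarrow> \<bar>y\<bar> \<le> M"
    using compact_imp_bounded bounded_real by metis
  have "\<bar>f x\<bar> \<le> M" for x
  proof -
    define k :: "real^'n" where "k = (\<chi> i. of_int \<lfloor>x$i\<rfloor>)"
    have "k $ i \<in> \<int>" for i unfolding k_def by simp
    then have "f ((x - k) + k) = f (x - k)"
      using per unfolding periodic1_def by blast
    moreover have "x - k \<in> cbox 0 1"
      unfolding k_def by (auto simp: mem_box_cart) (smt (verit) real_of_int_floor_add_one_gt)
    ultimately show ?thesis using M by auto
  qed
  then show ?thesis by blast
qed

lemma periodic1_mult:
  fixes f g :: "real ^ 'n \<Rightarrow> real"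
  assumes "periodic1 f" "periodic1 g"
  shows "periodic1 (\<lambda>x. f x * g x)"
  using assms unfolding periodic1_def by simp

theorem lemma3p4:
  fixes f :: "real ^ 'n \<Rightarrow> real"
    and g :: "nat \<Rightarrow> real ^ 'n \<Rightarrow> real"
    and g0 :: "real ^ 'n \<Rightarrow> real"
    and \<epsilon> :: "nat \<Rightarrow> real"
  assumes f_cont: "continuous_on UNIV f"
    and f_per: "periodic1 f"
    and g_cont: "\<And>m. continuous_on UNIV (g m)"
    and g_per: "\<And>m. periodic1 (g m)"
    and g_bdd: "\<exists>B. \<forall>m x. \<bar>g m x\<bar> \<le> B"
    and g_lim: "\<And>x. (\<lambda>m. g m x) \<longlonglongrightarrow> g0 x"
    and eps_pos: "\<And>m. \<epsilon> m > 0"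
    and eps_lim: "\<epsilon> \<longlonglongrightarrow> 0"
  shows "(\<lambda>m. \<epsilon> m powr (real CARD('n) / 2) *
            integral UNIV (\<lambda>x. exp (- pi * \<epsilon> m * (norm x)\<^sup>2) * f x * g m x))
         \<longlonglongrightarrow> integral unit_cube (\<lambda>x. f x * g0 x)"
proof -
  define n where "n = CARD('n)"
  define T where "T = cube (0::real^'n)"
  define s where "s m = sqrt (\<epsilon> m)" for m
  define h where "h m x = f x * g m x" for m x
  obtain Mf where Mf: "\<And>x. \<bar>f x\<bar> \<le> Mf" using periodic_bounded[OF f_cont f_per] by blast
  obtain B where B: "\<And>m x. \<bar>g m x\<bar> \<le> B" using g_bdd by blast
  define M where "M = Mf * B"
  have Mf0: "0 \<le> Mf" using Mf[of 0] by simp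
  have B0: "0 \<le> B" using B[of 0 0] by simp
  have M0: "0 \<le> M" unfolding M_def using Mf0 B0 by simp
  have hM: "\<bar>h m x\<bar> \<le> M" for m x
    unfolding h_def M_def abs_mult using Mf[of x] B[of m x] Mf0 B0 by (intro mult_mono) auto
  have [measurable]: "f \<in> borel_measurable borel" using f_cont by (intro borel_measurable_continuous_onI)
  have gm[measurable]: "g m \<in> borel_measurable borel" for m using g_cont by (intro borel_measurable_continuous_onI)
  have hm[measurable]: "h m \<in> borel_measurable borel" for m unfolding h_def by measurable
  have g0m[measurable]: "g0 \<in> borel_measurable borel"
    by (rule borel_measurable_LIMSEQ_real[OF g_lim gm])
  have hper: "periodic1 (h m)" for m unfolding h_def by (intro periodic1_mult f_per g_per)
  have s0: "0 < s m" for m unfolding s_def using eps_pos[of m] by simp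
  have slim: "s \<longlonglongrightarrow> 0" unfolding s_def using tendsto_real_sqrt[OF eps_lim] by simp
  have [measurable]: "T \<in> sets borel" unfolding T_def by simp
  have Tm: "emeasure lborel T = 1" unfolding T_def by (rule cube0_measure)
  define a where "a m = s m ^ n * (\<integral>z. gauss (s m *\<^sub>R z) * h m z \<partial>lborel)" for m
  have lhs: "\<epsilon> m powr (real CARD('n) / 2) *
            integral UNIV (\<lambda>x. exp (- pi * \<epsilon> m * (norm x)\<^sup>2) * f x * g m x) = a m" for m
  proof -
    have p: "\<epsilon> m powr (real CARD('n) / 2) = s m ^ n"
    proof -
      have "\<epsilon> m powr (real CARD('n) / 2) = (\<epsilon> m powr (1/2)) powr (real n)"
        unfolding n_def by (simp add: powr_powr)
      also have "\<dots> = s m ^ n" unfolding s_def using eps_pos[of m]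
        by (simp add: powr_half_sqrt powr_realpow)
      finally show ?thesis .
    qed
    have e: "exp (- pi * \<epsilon> m * (norm x)\<^sup>2) * f x * g m x = gauss (s m *\<^sub>R x) * h m x" for x
    proof -
      have "(norm (s m *\<^sub>R x))\<^sup>2 = \<epsilon> m * (norm x)\<^sup>2"
        unfolding s_def using eps_pos[of m] by (simp add: power_mult_distrib)
      then show ?thesis unfolding gauss_def h_def by (simp add: mult_ac)
    qed
    have wi: "integrable lborel (\<lambda>z. gauss (s m *\<^sub>R z) * h m z)"
      using s0[of m] by (intro integrable_mult_bdd[OF _ hm hM] lborel_integrable_scale gauss_integrable) auto
    have "integral UNIV (\<lambda>x. exp (- pi * \<epsilon> m * (norm x)\<^sup>2) * f x * g m x)
        = integral UNIV (\<lambda>z. gauss (s m *\<^sub>R z) * h m z)" by (simp only: e)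
    also have "\<dots> = (\<integral>z. gauss (s m *\<^sub>R z) * h m z \<partial>lborel)"
      by (rule integral_unique[OF has_integral_integral_real[OF wi]])
    finally show ?thesis unfolding a_def p by simp
  qed
  have rhs: "integral unit_cube (\<lambda>x. f x * g0 x) = (\<integral>x. indicator T x * (f x * g0 x) \<partial>lborel)"
  proof -
    have i: "integrable lborel (\<lambda>x. indicator T x * (f x * g0 x))"
    proof (rule integrable_ind_bdd)
      show "emeasure lborel T < \<infinity>" using Tm by simp
      show "\<bar>f x * g0 x\<bar> \<le> M" for x
      proof -
        have "\<bar>g0 x\<bar> \<le> B"
          using B by (intro tendsto_le[OF trivial_limit_sequentially tendsto_const tendsto_rabs[OF g_lim[of x]]]) auto
        then show ?thesis unfolding M_def abs_mult using Mf[of x] Mf0 B0 by (intro mult_mono) auto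
      qed
    qed auto
    have "((\<lambda>x. indicator T x * (f x * g0 x)) has_integral (\<integral>x. indicator T x * (f x * g0 x) \<partial>lborel)) UNIV"
      by (rule has_integral_integral_real[OF i])
    moreover have "(\<lambda>x. indicator T x * (f x * g0 x)) = (\<lambda>x. if x \<in> T then f x * g0 x else 0)"
      by (auto simp: indicator_def fun_eq_iff)
    ultimately have "((\<lambda>x. if x \<in> T then f x * g0 x else 0) has_integral (\<integral>x. indicator T x * (f x * g0 x) \<partial>lborel)) UNIV"
      by simp
    then have "((\<lambda>x. f x * g0 x) has_integral (\<integral>x. indicator T x * (f x * g0 x) \<partial>lborel)) unit_cube"
      unfolding has_integral_restrict_UNIV T_def cube_def unit_cube_def by simp

    then show ?thesis by (rule integral_unique)
  qed
  define b where "b m = (\<integral>x. indicator T x * h m x \<partial>lborel)" for m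
  have blim: "b \<longlonglongrightarrow> (\<integral>x. indicator T x * (f x * g0 x) \<partial>lborel)"
    unfolding b_def
  proof (rule integral_dominated_convergence[where w="\<lambda>x. M * indicator T x"])
    show "integrable lborel (\<lambda>x. M * indicator T x :: real)"
      using Tm by (intro integrable_mult_right integrable_real_indicator) auto
    show "AE x in lborel. (\<lambda>m. indicator T x * h m x) \<longlonglongrightarrow> indicator T x * (f x * g0 x)"
      unfolding h_def by (intro AE_I2 tendsto_intros g_lim)
    show "AE x in lborel. norm (indicator T x * h m x) \<le> M * indicator T x" for m
      using hM M0 by (intro AE_I2) (auto simp: indicator_def)
  qed auto
  have dlim: "(\<lambda>m. a m - b m) \<longlonglongrightarrow> 0"
  proof (rule tendstoI)
    fix e :: real assume e: "0 < e"
    define \<delta> where "\<delta> = e / (M + 1)"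
    have \<delta>: "0 < \<delta>" unfolding \<delta>_def using e M0 by simp
    have Me: "M * \<delta> < e"
    proof -
      have "M * \<delta> = e * (M / (M + 1))" unfolding \<delta>_def by simp
      also have "\<dots> < e * 1" using e M0 by (intro mult_strict_left_mono) auto
      finally show ?thesis by simp
    qed
    obtain r where r: "0 < r" and rD: "\<And>a::real^'n. norm a < r \<Longrightarrow> (\<integral>u. \<bar>gauss (u - a) - gauss u\<bar> \<partial>lborel) < \<delta>"
      using gauss_shift_small[OF \<delta>, where 'a="real^'n"] by blast
    have "eventually (\<lambda>m. s m < r / (real n + 1)) sequentially"
      using order_tendstoD(2)[OF slim] r by simp
    then show "eventually (\<lambda>m. dist (a m - b m) 0 < e) sequentially"
    proof eventually_elim
      case (elim m)
      have D: "(\<integral>u. \<bar>gauss (u - s m *\<^sub>R y) - gauss u\<bar> \<partial>lborel) \<le> \<delta>" if y: "y \<in> cube 0" for y :: "real^'n"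
      proof -
        have "norm y \<le> (\<Sum>i\<in>UNIV. \<bar>y$i\<bar>)" by (rule norm_le_l1_cart)
        also have "\<dots> \<le> (\<Sum>i\<in>(UNIV::'n set). 1)"
          using y unfolding cube_def by (intro sum_mono) (auto simp: less_imp_le)
        finally have ny: "norm y \<le> real n" unfolding n_def by simp
        have "norm (s m *\<^sub>R y) = s m * norm y" using s0[of m] by simp
        also have "\<dots> \<le> s m * real n" using ny s0[of m] by (intro mult_left_mono) auto
        also have "\<dots> < r"
        proof -
          have "s m * real n \<le> s m * (real n + 1)" using s0[of m] by simp
          also have "\<dots> < r" using elim by (simp add: pos_less_divide_eq)
          finally show ?thesis .
        qed
        finally show ?thesis using rD by (simp add: less_imp_le)
      qed
      have "\<bar>a m - b m\<bar> \<le> M * \<delta>"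
        unfolding a_def b_def T_def n_def
        by (rule main_estimate[OF hm hM hper s0 D])
      then show ?case using Me by simp
    qed
  qed
  have "(\<lambda>m. (a m - b m) + b m) \<longlonglongrightarrow> 0 + (\<integral>x. indicator T x * (f x * g0 x) \<partial>lborel)"
    by (intro tendsto_add dlim blim)
  then show ?thesis unfolding lhs rhs by simp
qed

end
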